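(* Let $n\geq 2$ and let $\mathbf{TP}(\alpha_2,\dots,\alpha_n)$ and $\mathbf{TP}'(\alpha_2',\dots,\alpha_n')$ be isomorphic transposed Poisson algebras. Then there exists an automorphism $\varphi$ of the associative algebra $\mu_0^n$, with parameters $A_1,\dots,A_n\in\mathbb{C}$, $A_1\neq 0$, such that for every $2\leq t\leq n$: \[ \sum_{i=2}^{t}\sum_{k_1+\cdots+k_i=t}A_{k_1}\cdots A_{k_i}\,\alpha_i'=\sum_{j=2}^{t}\sum_{i=1}^{t-j+1}\sum_{k_1+k_2=t-i-j+3}(t-2i-j+3)\,A_iA_{k_1}A_{k_2}\,\alpha_j, \] where the inner sums run over positive integers $k_1,k_2,\dots$.
   Context: $\mu_0^n$ is the complex commutative associative algebra with basis $\{e_1,\dots,e_n\}$ and $e_i\cdot e_j=e_{i+j}$ for $2\leq i+j\leq n$, other products zero. Every automorphism $\varphi$ of $\mu_0^n$ has the form $\varphi(e_1)=\sum_{i=1}^nA_ie_i$ and $\varphi(e_i)=\sum_{j=i}^n\sum_{k_1+\cdots+k_i=j}A_{k_1}\cdots A_{k_i}e_j$ for $2\leq i\leq n$, with $A_1\neq0$; $A_1,\dots,A_n$ are called its parameters. For $\alpha_2,\dots,\alpha_n\in\mathbb{C}$, $\mathbf{TP}(\alpha_2,\dots,\alpha_n)$ denotes $\mu_0^n$ with its associative product together with the bracket $[e_i,e_j]=(j-i)\sum_{t=i+j-1}^{n}\alpha_{t-i-j+3}e_t$ for $3\leq i+j\leq n+1$, other brackets of basis elements zero; it is a transposed Poisson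 algebra (commutative associative product, Lie bracket, and $2z\cdot[x,y]=[z\cdot x,y]+[x,z\cdot y]$). Isomorphisms preserve both operations. *)

theory Defs
  imports Complex_Main
begin

text \<open>The underlying vector space of mu_0^n: complex vectors with coordinates
  indexed by 1..n, represented as functions nat => complex vanishing outside {1..n}.\<close>

definition vspace :: "nat \<Rightarrow> (nat \<Rightarrow> complex) set" where
  "vspace n = {x. \<forall>t. (t < 1 \<or> t > n) \<longrightarrow> x t = 0}"

definition ebasis :: "nat \<Rightarrow> nat \<Rightarrow> complex" where
  "ebasis i = (\<lambda>t. if t = i then 1 else 0)"

text \<open>Associative product of mu_0^n: e_i e_j = e_(i+j) if i+j <= n, else 0
  (bilinear extension).\<close>
definition mu0_mult :: "nat \<Rightarrow> (nat \<Rightarrow> complex) \<Rightarrow> (nat \<Rightarrow> complex) \<Rightarrow> nat \<Rightarrow> complex" where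
  "mu0_mult n x y = (\<lambda>t. if 1 \<le> t \<and> t \<le> n then
      (\<Sum>i=1..n. \<Sum>j=1..n. if i + j = t then x i * y j else 0) else 0)"

text \<open>Bracket of TP(alpha_2,...,alpha_n):
  [e_i,e_j] = (j-i) * sum_{t=i+j-1}^{n} alpha_(t-i-j+3) e_t for 3 <= i+j <= n+1,
  other brackets of basis elements zero (bilinear extension).\<close>
definition tp_bracket :: "nat \<Rightarrow> (nat \<Rightarrow> complex) \<Rightarrow> (nat \<Rightarrow> complex) \<Rightarrow> (nat \<Rightarrow> complex) \<Rightarrow> nat \<Rightarrow> complex" where
  "tp_bracket n \<alpha> x y = (\<lambda>t. if 1 \<le> t \<and> t \<le> n then
      (\<Sum>i=1..n. \<Sum>j=1..n.
         if 3 \<le> i + j \<and> i + j \<le> n + 1 \<and> i + j - 1 \<le> t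
         then x i * y j * (of_int (int j - int i) * \<alpha> (t + 3 - (i + j)))
         else 0) else 0)"

definition is_linear_on :: "nat \<Rightarrow> ((nat \<Rightarrow> complex) \<Rightarrow> (nat \<Rightarrow> complex)) \<Rightarrow> bool" where
  "is_linear_on n f \<longleftrightarrow>
     (\<forall>x\<in>vspace n. \<forall>y\<in>vspace n. f (\<lambda>t. x t + y t) = (\<lambda>t. f x t + f y t)) \<and>
     (\<forall>c. \<forall>x\<in>vspace n. f (\<lambda>t. c * x t) = (\<lambda>t. c * f x t))"

definition mu0_automorphism :: "nat \<Rightarrow> ((nat \<Rightarrow> complex) \<Rightarrow> (nat \<Rightarrow> complex)) \<Rightarrow> bool" where
  "mu0_automorphism n f \<longleftrightarrow> is_linear_on n f \<and> bij_betw f (vspace n) (vspace n) \<and>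
     (\<forall>x\<in>vspace n. \<forall>y\<in>vspace n. f (mu0_mult n x y) = mu0_mult n (f x) (f y))"

definition tp_isomorphism :: "nat \<Rightarrow> (nat \<Rightarrow> complex) \<Rightarrow> (nat \<Rightarrow> complex) \<Rightarrow> ((nat \<Rightarrow> complex) \<Rightarrow> (nat \<Rightarrow> complex)) \<Rightarrow> bool" where
  "tp_isomorphism n \<alpha> \<alpha>' f \<longleftrightarrow> is_linear_on n f \<and> bij_betw f (vspace n) (vspace n) \<and>
     (\<forall>x\<in>vspace n. \<forall>y\<in>vspace n. f (mu0_mult n x y) = mu0_mult n (f x) (f y)) \<and>
     (\<forall>x\<in>vspace n. \<forall>y\<in>vspace n. f (tp_bracket n \<alpha> x y) = tp_bracket n \<alpha>' (f x) (f y))"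

definition tp_isomorphic :: "nat \<Rightarrow> (nat \<Rightarrow> complex) \<Rightarrow> (nat \<Rightarrow> complex) \<Rightarrow> bool" where
  "tp_isomorphic n \<alpha> \<alpha>' \<longleftrightarrow> (\<exists>f. tp_isomorphism n \<alpha> \<alpha>' f)"

definition comp_sum :: "(nat \<Rightarrow> complex) \<Rightarrow> nat \<Rightarrow> nat \<Rightarrow> complex" where
  "comp_sum A i t = (\<Sum>ks\<in>{ks. length ks = i \<and> set ks \<subseteq> {1..t} \<and> sum_list ks = t}.
                        prod_list (map A ks))"

end

theory Submission
  imports Defs
begin


lemma vspace_iff: "x \<in> vspace n \<longleftrightarrow> (\<forall>t. (t < 1 \<or> t > n) \<longrightarrow> x t = 0)"
  by (simp add: vspace_def)

lemma mu0_in: "mu0_mult n x y \<in> vspace n"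
  unfolding vspace_def mu0_mult_def by (simp add: not_le)

lemma br_in: "tp_bracket n a x y \<in> vspace n"
  unfolding vspace_def tp_bracket_def by (simp add: not_le)

lemma eb_in: "1 \<le> i \<Longrightarrow> i \<le> n \<Longrightarrow> ebasis i \<in> vspace n"
  by (auto simp: vspace_def ebasis_def)

lemma add_in: "x \<in> vspace n \<Longrightarrow> y \<in> vspace n \<Longrightarrow> (\<lambda>t. x t + y t) \<in> vspace n"
  by (auto simp: vspace_def)

lemma smul_in: "x \<in> vspace n \<Longrightarrow> (\<lambda>t. c * x t) \<in> vspace n"
  by (auto simp: vspace_def)

lemma sum_in: "\<forall>i\<in>I. v i \<in> vspace n \<Longrightarrow> (\<lambda>t. \<Sum>i\<in>I. c i * v i t) \<in> vspace n"
  by (auto simp: vspace_def)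
lemma lin_zero: "is_linear_on n f \<Longrightarrow> f (\<lambda>t. 0) = (\<lambda>t. 0)"
proof -
  assume "is_linear_on n f"
  then have sc: "\<forall>c. \<forall>x\<in>vspace n. f (\<lambda>t. c * x t) = (\<lambda>t. c * f x t)"
    unfolding is_linear_on_def by blast
  have z: "(\<lambda>t. 0::complex) \<in> vspace n" by (simp add: vspace_def)
  show ?thesis using sc[rule_format, OF z, of 0] by simp
qed

lemma lin_sum:
  assumes L: "is_linear_on n f" and "finite I" and "\<forall>i\<in>I. v i \<in> vspace n"
  shows "f (\<lambda>t. \<Sum>i\<in>I. c i * v i t) = (\<lambda>t. \<Sum>i\<in>I. c i * f (v i) t)"
  using assms(2,3)
proof (induction I rule: finite_induct)
  case empty
  then show ?case using lin_zero[OF L] by simp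
next
  case (insert x F)
  have a: "(\<lambda>t. c x * v x t) \<in> vspace n" using insert by (simp add: smul_in)
  have b: "(\<lambda>t. \<Sum>i\<in>F. c i * v i t) \<in> vspace n" using insert by (simp add: sum_in)
  have "f (\<lambda>t. \<Sum>i\<in>insert x F. c i * v i t) = f (\<lambda>t. (\<lambda>t. c x * v x t) t + (\<lambda>t. \<Sum>i\<in>F. c i * v i t) t)"
    using insert by simp
  also have "\<dots> = (\<lambda>t. f (\<lambda>t. c x * v x t) t + f (\<lambda>t. \<Sum>i\<in>F. c i * v i t) t)"
    using L a b unfolding is_linear_on_def by (meson a b)
  also have "f (\<lambda>t. c x * v x t) = (\<lambda>t. c x * f (v x) t)"
    using L insert unfolding is_linear_on_def by blast
  finally show ?case using insert by simp
qed

lemma len_le_sum: "set ks \<subseteq> {1..(t::nat)} \<Longrightarrow> length ks \<le> sum_list ks"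
  by (induction ks) auto

lemma cs_zero: "i > t \<Longrightarrow> comp_sum A i t = 0"
proof -
  assume "i > t"
  have "\<And>ks. length ks = i \<Longrightarrow> set ks \<subseteq> {1..t} \<Longrightarrow> sum_list ks \<noteq> t"
    using len_le_sum \<open>i > t\<close> by fastforce
  then have E: "{ks. length ks = i \<and> set ks \<subseteq> {1..t} \<and> sum_list ks = t} = {}"
    by blast
  show ?thesis unfolding comp_sum_def E by simp
qed

lemma cs_set_fin: "finite {ks. length ks = i \<and> set ks \<subseteq> {1..(t::nat)} \<and> sum_list ks = t}"
proof -
  have "finite {ks. set ks \<subseteq> {1..t} \<and> length ks = i}" by (rule finite_lists_length_eq) simp
  then show ?thesis by (rule rev_finite_subset) auto
qed

lemma cs_suc: "comp_sum A (Suc i) t = (\<Sum>k=1..t. A k * comp_sum A i (t - k))"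
proof -
  let ?L = "\<lambda>i t. {ks. length ks = i \<and> set ks \<subseteq> {1..(t::nat)} \<and> sum_list ks = t}"
  have "comp_sum A (Suc i) t = (\<Sum>p\<in>Sigma {1..t} (\<lambda>k. ?L i (t - k)). A (fst p) * prod_list (map A (snd p)))"
    unfolding comp_sum_def
  proof (rule sum.reindex_bij_witness[where i="\<lambda>p. fst p # snd p" and j="\<lambda>ks. (hd ks, tl ks)"])
    fix a assume a: "a \<in> ?L (Suc i) t"
    then obtain k ks where [simp]: "a = k # ks" by (cases a) auto
    show "fst (hd a, tl a) # snd (hd a, tl a) = a" by simp
    have "\<forall>x\<in>set ks. x \<le> sum_list ks" using member_le_sum_list by blast
    then show "(hd a, tl a) \<in> Sigma {1..t} (\<lambda>k. ?L i (t - k))" using a by auto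
    show "A (fst (hd a, tl a)) * prod_list (map A (snd (hd a, tl a))) = prod_list (map A a)" by simp
  next
    fix b assume b: "b \<in> Sigma {1..t} (\<lambda>k. ?L i (t - k))"
    then show "(hd (fst b # snd b), tl (fst b # snd b)) = b" by auto
    show "fst b # snd b \<in> ?L (Suc i) t" using b by (auto simp: subset_iff)
  qed
  also have "\<dots> = (\<Sum>k=1..t. \<Sum>ks\<in>?L i (t - k). A k * prod_list (map A ks))"
    using sum.Sigma[of "{1..t}" "\<lambda>k. ?L i (t-k)" "\<lambda>k ks. A k * prod_list (map A ks)", OF _ ballI[OF cs_set_fin]]
    by (simp add: split_beta)
  also have "\<dots> = (\<Sum>k=1..t. A k * comp_sum A i (t - k))"
    by (simp add: comp_sum_def sum_distrib_left)
  finally show ?thesis .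
qed

lemma cs_zero_i: "comp_sum A 0 s = (if s = 0 then 1 else 0)"
proof -
  have "{ks. length ks = 0 \<and> set ks \<subseteq> {1..(s::nat)} \<and> sum_list ks = s} = (if s = 0 then {[]} else {})"
    by auto
  then show ?thesis by (simp add: comp_sum_def)
qed

lemma cs_one: "t \<ge> 1 \<Longrightarrow> comp_sum A 1 t = A t"
proof -
  assume t: "t \<ge> 1"
  have "comp_sum A 1 t = (\<Sum>k=1..t. A k * comp_sum A 0 (t - k))" using cs_suc[of A 0 t] by simp
  also have "\<dots> = (\<Sum>k=1..t. if k = t then A k else 0)"
    by (rule sum.cong) (auto simp: cs_zero_i)
  also have "\<dots> = A t" using t by simp
  finally show ?thesis .
qed



lemma inner_delta: "(\<Sum>b=1..(n::nat). if a + b = t then g b else (0::complex)) =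
   (if a < t \<and> t - a \<le> n then g (t - a) else 0)"
proof -
  have "(\<Sum>b=1..n. if a + b = t then g b else (0::complex)) =
        (\<Sum>b=1..n. if b = t - a \<and> a < t then g b else 0)"
  proof (rule sum.cong)
    fix b assume "b \<in> {1..n}"
    then have "(a + b = t) = (b = t - a \<and> a < t)" by auto
    then show "(if a + b = t then g b else 0) = (if b = t - a \<and> a < t then g b else 0)" by simp
  qed simp
  also have "\<dots> = (if a < t \<and> t - a \<le> n then g (t - a) else 0)"
    by (cases "a < t") (auto simp: sum.delta')
  finally show ?thesis .
qed

lemma mu0_at: "1 \<le> t \<Longrightarrow> t \<le> n \<Longrightarrow>
  mu0_mult n x y t = (\<Sum>a=1..n. \<Sum>b=1..n. if a + b = t then x a * y b else 0)"
  unfolding mu0_mult_def by simp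

lemma eb_succ: "1 \<le> i \<Longrightarrow> Suc i \<le> n \<Longrightarrow> ebasis (Suc i) = mu0_mult n (ebasis 1) (ebasis i)"
proof (rule ext)
  fix t assume i: "1 \<le> i" "Suc i \<le> n"
  show "ebasis (Suc i) t = mu0_mult n (ebasis 1) (ebasis i) t"
  proof (cases "1 \<le> t \<and> t \<le> n")
    case True
    have "mu0_mult n (ebasis 1) (ebasis i) t = (\<Sum>a=1..n. \<Sum>b=1..n. if a + b = t then ebasis 1 a * ebasis i b else 0)"
      using True by (intro mu0_at) auto
    also have "\<dots> = (\<Sum>a=1..n. if a = 1 then (\<Sum>b=1..n. if a + b = t then ebasis i b else 0) else 0)"
      by (rule sum.cong) (auto simp: ebasis_def cong: if_cong)
    also have "\<dots> = (\<Sum>b=1..n. if 1 + b = t then ebasis i b else 0)"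
      using i by (simp add: sum.delta)
    also have "\<dots> = ebasis (Suc i) t"
      using True i by (subst inner_delta) (auto simp: ebasis_def)
    finally show ?thesis by simp
  next
    case False
    then show ?thesis using i by (auto simp: mu0_mult_def ebasis_def)
  qed
qed

lemma pow_lemma:
  assumes M: "\<forall>x\<in>vspace n. \<forall>y\<in>vspace n. \<phi> (mu0_mult n x y) = mu0_mult n (\<phi> x) (\<phi> y)"
  shows "1 \<le> i \<Longrightarrow> i \<le> n \<Longrightarrow> 1 \<le> t \<Longrightarrow> t \<le> n \<Longrightarrow> \<phi> (ebasis i) t = comp_sum (\<lambda>k. \<phi> (ebasis 1) k) i t"
proof (induction i arbitrary: t)
  case 0
  then show ?case by simp
next
  case (Suc i)
  let ?A = "\<lambda>k. \<phi> (ebasis 1) k"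
  show ?case
  proof (cases "i = 0")
    case True
    then show ?thesis using Suc.prems cs_one by simp
  next
    case False
    then have i1: "1 \<le> i" by simp
    have "\<phi> (ebasis (Suc i)) t = mu0_mult n (?A) (\<phi> (ebasis i)) t"
      using eb_succ[OF i1 Suc.prems(2)] M eb_in[of 1 n] eb_in[OF i1, of n] Suc.prems by simp
    also have "\<dots> = (\<Sum>a=1..n. \<Sum>b=1..n. if a + b = t then ?A a * \<phi> (ebasis i) b else 0)"
      using Suc.prems by (intro mu0_at) auto
    also have "\<dots> = (\<Sum>a=1..n. \<Sum>b=1..n. if a + b = t then ?A a * comp_sum ?A i b else 0)"
      using Suc.IH i1 Suc.prems by (intro sum.cong refl) auto
    also have "\<dots> = (\<Sum>a=1..n. if a < t then ?A a * comp_sum ?A i (t - a) else 0)"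
      using Suc.prems by (intro sum.cong refl, subst inner_delta) (auto cong: if_cong)
    also have "\<dots> = (\<Sum>a\<in>{1..n} \<inter> {a. a < t}. ?A a * comp_sum ?A i (t - a))"
      by (simp add: sum.inter_restrict cong: if_cong)
    also have "{1..n} \<inter> {a. a < t} = {1..<t}" using Suc.prems by auto
    also have "(\<Sum>a\<in>{1..<t}. ?A a * comp_sum ?A i (t - a)) = (\<Sum>a=1..t. ?A a * comp_sum ?A i (t - a))"
      using Suc.prems i1 by (simp add: sum.last_plus cs_zero_i cs_zero)
    also have "\<dots> = comp_sum ?A (Suc i) t" by (simp add: cs_suc)
    finally show ?thesis .
  qed
qed

lemma A1_nonzero:
  assumes L: "is_linear_on n \<phi>" and B: "bij_betw \<phi> (vspace n) (vspace n)"
    and M: "\<forall>x\<in>vspace n. \<forall>y\<in>vspace n. \<phi> (mu0_mult n x y) = mu0_mult n (\<phi> x) (\<phi> y)"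
    and n: "n \<ge> 1"
  shows "\<phi> (ebasis 1) 1 \<noteq> 0"
proof
  assume A0: "\<phi> (ebasis 1) 1 = 0"
  have e1: "ebasis 1 \<in> vspace n" using n by (simp add: eb_in)
  then obtain y where y: "y \<in> vspace n" "\<phi> y = ebasis 1" using B by (metis bij_betw_iff_bijections)
  define w where "w = (\<lambda>s. if 1 \<le> s \<and> s < n then y (s + 1) else 0)"
  have w: "w \<in> vspace n" by (simp add: w_def vspace_def)
  have u: "(\<lambda>t. y 1 * ebasis 1 t) \<in> vspace n" using e1 by (rule smul_in)
  have mw: "mu0_mult n (ebasis 1) w t = (if 2 \<le> t \<and> t \<le> n then y t else 0)" for t
  proof (cases "1 \<le> t \<and> t \<le> n")
    case True
    have "mu0_mult n (ebasis 1) w t = (\<Sum>a=1..n. \<Sum>b=1..n. if a + b = t then ebasis 1 a * w b else 0)"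
      using True by (intro mu0_at) auto
    also have "\<dots> = (\<Sum>a=1..n. if a = 1 then (\<Sum>b=1..n. if a + b = t then w b else 0) else 0)"
      by (rule sum.cong) (auto simp: ebasis_def cong: if_cong)
    also have "\<dots> = (\<Sum>b=1..n. if 1 + b = t then w b else 0)"
      using n by (simp add: sum.delta)
    also have "\<dots> = (if 2 \<le> t \<and> t \<le> n then y t else 0)"
      using True by (subst inner_delta) (auto simp: w_def)
    finally show ?thesis .
  next
    case False
    then show ?thesis by (auto simp: mu0_mult_def)
  qed
  have ydec: "y = (\<lambda>t. (\<lambda>t. y 1 * ebasis 1 t) t + mu0_mult n (ebasis 1) w t)"
  proof
    fix t
    show "y t = y 1 * ebasis 1 t + mu0_mult n (ebasis 1) w t"
      using y(1) unfolding mw by (cases "t = 0") (auto simp: ebasis_def vspace_def)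
  qed
  have "\<phi> y = (\<lambda>t. \<phi> (\<lambda>t. y 1 * ebasis 1 t) t + \<phi> (mu0_mult n (ebasis 1) w) t)"
    using L u mu0_in unfolding is_linear_on_def by (subst ydec) (meson u mu0_in)
  also have "\<phi> (\<lambda>t. y 1 * ebasis 1 t) = (\<lambda>t. y 1 * \<phi> (ebasis 1) t)"
    using L e1 unfolding is_linear_on_def by blast
  also have "\<phi> (mu0_mult n (ebasis 1) w) = mu0_mult n (\<phi> (ebasis 1)) (\<phi> w)"
    using M e1 w by blast
  finally have "\<phi> y 1 = y 1 * \<phi> (ebasis 1) 1 + mu0_mult n (\<phi> (ebasis 1)) (\<phi> w) 1" by simp
  also have "mu0_mult n (\<phi> (ebasis 1)) (\<phi> w) 1 = 0"
    by (simp add: mu0_mult_def)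
  finally show False using A0 y(2) by (simp add: ebasis_def)
qed

lemma inv_iso:
  assumes "tp_isomorphism n \<alpha> \<alpha>' f"
  shows "tp_isomorphism n \<alpha>' \<alpha> (inv_into (vspace n) f)"
proof -
  let ?V = "vspace n" and ?g = "inv_into (vspace n) f"
  have L: "is_linear_on n f" and B: "bij_betw f ?V ?V"
    and M: "\<forall>x\<in>?V. \<forall>y\<in>?V. f (mu0_mult n x y) = mu0_mult n (f x) (f y)"
    and Br: "\<forall>x\<in>?V. \<forall>y\<in>?V. f (tp_bracket n \<alpha> x y) = tp_bracket n \<alpha>' (f x) (f y)"
    using assms unfolding tp_isomorphism_def by auto
  have inj: "inj_on f ?V" and im: "f ` ?V = ?V" using B by (auto simp: bij_betw_def)
  have gV: "x \<in> ?V \<Longrightarrow> ?g x \<in> ?V" for x using im by (metis inv_into_into)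
  have fg: "x \<in> ?V \<Longrightarrow> f (?g x) = x" for x using im by (simp add: f_inv_into_f)
  have key: "u \<in> ?V \<Longrightarrow> f u = w \<Longrightarrow> ?g w = u" for u w using inj by (metis inv_into_f_f)
  have "is_linear_on n ?g"
    unfolding is_linear_on_def
  proof (intro conjI ballI allI)
    fix x y assume x: "x \<in> ?V" and y: "y \<in> ?V"
    show "?g (\<lambda>t. x t + y t) = (\<lambda>t. ?g x t + ?g y t)"
    proof (rule key)
      show "(\<lambda>t. ?g x t + ?g y t) \<in> ?V" using gV x y by (simp add: add_in)
      show "f (\<lambda>t. ?g x t + ?g y t) = (\<lambda>t. x t + y t)"
        using L gV x y fg unfolding is_linear_on_def by simp
    qed
  next
    fix c x assume x: "x \<in> ?V"
    show "?g (\<lambda>t. c * x t) = (\<lambda>t. c * ?g x t)"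
    proof (rule key)
      show "(\<lambda>t. c * ?g x t) \<in> ?V" using gV x by (simp add: smul_in)
      show "f (\<lambda>t. c * ?g x t) = (\<lambda>t. c * x t)"
        using L gV x fg unfolding is_linear_on_def by simp
    qed
  qed
  moreover have "bij_betw ?g ?V ?V" using B by (metis bij_betw_inv_into)
  moreover have "\<forall>x\<in>?V. \<forall>y\<in>?V. ?g (mu0_mult n x y) = mu0_mult n (?g x) (?g y)"
    using M gV fg mu0_in by (intro ballI key) auto
  moreover have "\<forall>x\<in>?V. \<forall>y\<in>?V. ?g (tp_bracket n \<alpha>' x y) = tp_bracket n \<alpha> (?g x) (?g y)"
    using Br gV fg br_in by (intro ballI key) auto
  ultimately show ?thesis unfolding tp_isomorphism_def by blast
qed



lemma bracket_sum:
  fixes A C \<alpha> :: "nat \<Rightarrow> complex"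
  assumes t: "2 \<le> t" "t \<le> n" and C1: "C 1 = 0"
  shows "(\<Sum>a=1..n. \<Sum>b=1..n. if 3 \<le> a + b \<and> a + b \<le> n + 1 \<and> a + b - 1 \<le> t
            then A a * C b * (of_int (int b - int a) * \<alpha> (t + 3 - (a + b))) else 0) =
         (\<Sum>j=2..t. \<Sum>i=1..t-j+1. of_int (int t - 2 * int i - int j + 3) * A i * C (t + 3 - (i + j)) * \<alpha> j)"
proof -
  define G where "G = (\<lambda>p. A (fst p) * C (snd p) * (of_int (int (snd p) - int (fst p)) * \<alpha> (t + 3 - (fst p + snd p))))"
  define T where "T = {p \<in> {1..n} \<times> {1..n}. 3 \<le> fst p + snd p \<and> fst p + snd p \<le> n + 1 \<and> fst p + snd p - 1 \<le> t}"
  define T' where "T' = {p \<in> T. 2 \<le> snd p}"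
  have "(\<Sum>a=1..n. \<Sum>b=1..n. if 3 \<le> a + b \<and> a + b \<le> n + 1 \<and> a + b - 1 \<le> t
            then A a * C b * (of_int (int b - int a) * \<alpha> (t + 3 - (a + b))) else 0)
        = (\<Sum>p\<in>{1..n} \<times> {1..n}. if 3 \<le> fst p + snd p \<and> fst p + snd p \<le> n + 1 \<and> fst p + snd p - 1 \<le> t
            then G p else 0)"
    unfolding sum.cartesian_product
    by (rule sum.cong[OF refl]) (simp only: split_beta G_def fst_conv snd_conv)
  also have "\<dots> = (\<Sum>p\<in>T. G p)"
    unfolding T_def by (rule sum.inter_filter[symmetric]) simp
  also have "\<dots> = (\<Sum>p\<in>T'. G p)"
  proof (rule sum.mono_neutral_right)
    show "finite T" unfolding T_def by (rule finite_subset[of _ "{1..n} \<times> {1..n}"]) auto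
    show "T' \<subseteq> T" unfolding T'_def by auto
    show "\<forall>p\<in>T - T'. G p = 0"
    proof
      fix p assume "p \<in> T - T'"
      then have "snd p = 1" unfolding T_def T'_def by auto
      then show "G p = 0" using C1 by (simp add: G_def)
    qed
  qed
  also have "\<dots> = (\<Sum>q\<in>Sigma {2..t} (\<lambda>j. {1..t-j+1}). of_int (int t - 2 * int (snd q) - int (fst q) + 3) * A (snd q) * C (t + 3 - (snd q + fst q)) * \<alpha> (fst q))"
  proof (rule sum.reindex_bij_witness[where i="\<lambda>q. (snd q, t + 3 - (snd q + fst q))" and j="\<lambda>p. (t + 3 - (fst p + snd p), fst p)"])
    fix p assume p: "p \<in> T'"
    then show "(snd (t + 3 - (fst p + snd p), fst p), t + 3 - (snd (t + 3 - (fst p + snd p), fst p) + fst (t + 3 - (fst p + snd p), fst p))) = p"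
      unfolding T'_def T_def by (cases p) auto
    show "(t + 3 - (fst p + snd p), fst p) \<in> Sigma {2..t} (\<lambda>j. {1..t-j+1})"
      using p unfolding T'_def T_def by (cases p) auto
    have e: "int (snd p) - int (fst p) = int t - 2 * int (fst p) - int (t + 3 - (fst p + snd p)) + 3"
      using p unfolding T'_def T_def by (cases p) auto
    have e2: "t + 3 - (fst p + (t + 3 - (fst p + snd p))) = snd p"
      using p unfolding T'_def T_def by (cases p) auto
    show "of_int (int t - 2 * int (snd (t + 3 - (fst p + snd p), fst p)) - int (fst (t + 3 - (fst p + snd p), fst p)) + 3) *
          A (snd (t + 3 - (fst p + snd p), fst p)) *
          C (t + 3 - (snd (t + 3 - (fst p + snd p), fst p) + fst (t + 3 - (fst p + snd p), fst p))) *
          \<alpha> (fst (t + 3 - (fst p + snd p), fst p)) = G p"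
      unfolding G_def by (simp only: fst_conv snd_conv e2 e[symmetric]) (simp add: mult_ac)
  next
    fix q assume q: "q \<in> Sigma {2..t} (\<lambda>j. {1..t-j+1})"
    then show "(t + 3 - (fst (snd q, t + 3 - (snd q + fst q)) + snd (snd q, t + 3 - (snd q + fst q))), fst (snd q, t + 3 - (snd q + fst q))) = q"
      by (cases q) auto
    show "(snd q, t + 3 - (snd q + fst q)) \<in> T'"
      using q t unfolding T'_def T_def by (auto simp: mem_Times_iff)
  qed
  also have "\<dots> = (\<Sum>j=2..t. \<Sum>i=1..t-j+1. of_int (int t - 2 * int i - int j + 3) * A i * C (t + 3 - (i + j)) * \<alpha> j)"
    by (subst sum.Sigma) (auto simp: split_beta)
  finally show ?thesis .
qed



lemma eb_apply: "ebasis i t = (if t = i then 1 else 0)" by (simp add: ebasis_def)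

lemma br12: "2 \<le> n \<Longrightarrow> tp_bracket n \<beta> (ebasis 1) (ebasis 2) = (\<lambda>s. \<Sum>i\<in>{2..n}. \<beta> i * ebasis i s)"
proof (rule ext)
  fix s assume n: "2 \<le> n"
  show "tp_bracket n \<beta> (ebasis 1) (ebasis 2) s = (\<Sum>i\<in>{2..n}. \<beta> i * ebasis i s)"
  proof (cases "1 \<le> s \<and> s \<le> n")
    case True
    have "tp_bracket n \<beta> (ebasis 1) (ebasis 2) s = (\<Sum>a=1..n. \<Sum>b=1..n.
         if 3 \<le> a + b \<and> a + b \<le> n + 1 \<and> a + b - 1 \<le> s
         then ebasis 1 a * ebasis 2 b * (of_int (int b - int a) * \<beta> (s + 3 - (a + b)))
         else 0)"
      using True unfolding tp_bracket_def by simp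
    also have "\<dots> = (\<Sum>a=1..n. \<Sum>b=1..n. if a = 1 then (if b = 2 then
         (if 3 \<le> a + b \<and> a + b \<le> n + 1 \<and> a + b - 1 \<le> s
         then of_int (int b - int a) * \<beta> (s + 3 - (a + b)) else 0) else 0) else 0)"
      by (intro sum.cong refl) (auto simp: eb_apply)
    also have "\<dots> = (\<Sum>a=1..n. if a = 1 then (\<Sum>b=1..n. if b = 2 then
         (if 3 \<le> a + b \<and> a + b \<le> n + 1 \<and> a + b - 1 \<le> s
         then of_int (int b - int a) * \<beta> (s + 3 - (a + b)) else 0) else 0) else 0)"
      by (intro sum.cong refl) auto
    also have "\<dots> = (if 2 \<le> s then \<beta> s else 0)"
      using n by (simp add: sum.delta)
    also have "\<dots> = (\<Sum>i\<in>{2..n}. if i = s then \<beta> i else 0)"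
      using True by (simp add: sum.delta')
    also have "\<dots> = (\<Sum>i\<in>{2..n}. \<beta> i * ebasis i s)"
      by (intro sum.cong refl) (simp add: eb_apply)
    finally show ?thesis .
  next
    case False
    then show ?thesis by (auto simp: tp_bracket_def eb_apply)
  qed
qed

lemma tp_at: "1 \<le> t \<Longrightarrow> t \<le> n \<Longrightarrow> tp_bracket n \<beta> x y t = (\<Sum>a=1..n. \<Sum>b=1..n.
         if 3 \<le> a + b \<and> a + b \<le> n + 1 \<and> a + b - 1 \<le> t
         then x a * y b * (of_int (int b - int a) * \<beta> (t + 3 - (a + b)))
         else 0)"
  unfolding tp_bracket_def by simp

theorem mainTheorem6:
  fixes n :: nat and \<alpha> \<alpha>' :: "nat \<Rightarrow> complex"
  assumes "n \<ge> 2"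
    and "tp_isomorphic n \<alpha> \<alpha>'"
  shows "\<exists>\<phi>. mu0_automorphism n \<phi> \<and>
           (let A = (\<lambda>i. \<phi> (ebasis 1) i) in
             A 1 \<noteq> 0 \<and>
             (\<forall>t. 2 \<le> t \<and> t \<le> n \<longrightarrow>
                (\<Sum>i=2..t. comp_sum A i t * \<alpha>' i) =
                (\<Sum>j=2..t. \<Sum>i=1..t-j+1.
                    of_int (int t - 2 * int i - int j + 3) * A i * comp_sum A 2 (t + 3 - (i + j)) * \<alpha> j)))"
proof -
  have n: "2 \<le> n" by fact
  obtain f where f: "tp_isomorphism n \<alpha> \<alpha>' f" using assms(2) unfolding tp_isomorphic_def by blast
  define \<phi> where "\<phi> = inv_into (vspace n) f"
  have iso: "tp_isomorphism n \<alpha>' \<alpha> \<phi>" unfolding \<phi>_def by (rule inv_iso[OF f])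
  have L: "is_linear_on n \<phi>" and B: "bij_betw \<phi> (vspace n) (vspace n)"
    and M: "\<forall>x\<in>vspace n. \<forall>y\<in>vspace n. \<phi> (mu0_mult n x y) = mu0_mult n (\<phi> x) (\<phi> y)"
    and Br: "\<forall>x\<in>vspace n. \<forall>y\<in>vspace n. \<phi> (tp_bracket n \<alpha>' x y) = tp_bracket n \<alpha> (\<phi> x) (\<phi> y)"
    using iso unfolding tp_isomorphism_def by auto
  have aut: "mu0_automorphism n \<phi>" unfolding mu0_automorphism_def using L B M by blast
  define A where "A = (\<lambda>i. \<phi> (ebasis 1) i)"
  have A1: "A 1 \<noteq> 0" unfolding A_def using A1_nonzero[OF L B M] n by simp
  have pw: "\<phi> (ebasis i) s = comp_sum A i s" if "1 \<le> i" "i \<le> n" "1 \<le> s" "s \<le> n" for i s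
    unfolding A_def using pow_lemma[OF M] that by blast
  have e1: "ebasis 1 \<in> vspace n" and e2: "ebasis 2 \<in> vspace n" using n by (auto intro: eb_in)
  have eq: "\<phi> (tp_bracket n \<alpha>' (ebasis 1) (ebasis 2)) = tp_bracket n \<alpha> A (\<phi> (ebasis 2))"
    using Br e1 e2 unfolding A_def by simp
  have lhs: "\<phi> (tp_bracket n \<alpha>' (ebasis 1) (ebasis 2)) = (\<lambda>s. \<Sum>i\<in>{2..n}. \<alpha>' i * \<phi> (ebasis i) s)"
    unfolding br12[OF n] by (rule lin_sum[OF L]) (auto intro: eb_in)
  have main: "(\<Sum>i=2..t. comp_sum A i t * \<alpha>' i) =
                (\<Sum>j=2..t. \<Sum>i=1..t-j+1.
                    of_int (int t - 2 * int i - int j + 3) * A i * comp_sum A 2 (t + 3 - (i + j)) * \<alpha> j)"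
    if t: "2 \<le> t" "t \<le> n" for t
  proof -
    have "(\<Sum>i=2..t. comp_sum A i t * \<alpha>' i) = (\<Sum>i=2..n. comp_sum A i t * \<alpha>' i)"
      using t by (intro sum.mono_neutral_left) (auto simp: cs_zero)
    also have "\<dots> = (\<Sum>i\<in>{2..n}. \<alpha>' i * \<phi> (ebasis i) t)"
      using t by (intro sum.cong refl) (simp add: pw mult.commute)
    also have "\<dots> = tp_bracket n \<alpha> A (\<phi> (ebasis 2)) t"
      using fun_cong[OF eq, of t] unfolding lhs by simp
    also have "\<dots> = (\<Sum>a=1..n. \<Sum>b=1..n.
         if 3 \<le> a + b \<and> a + b \<le> n + 1 \<and> a + b - 1 \<le> t
         then A a * \<phi> (ebasis 2) b * (of_int (int b - int a) * \<alpha> (t + 3 - (a + b)))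
         else 0)"
      using t by (intro tp_at) auto
    also have "\<dots> = (\<Sum>a=1..n. \<Sum>b=1..n.
         if 3 \<le> a + b \<and> a + b \<le> n + 1 \<and> a + b - 1 \<le> t
         then A a * comp_sum A 2 b * (of_int (int b - int a) * \<alpha> (t + 3 - (a + b)))
         else 0)"
    proof (intro sum.cong refl)
      fix a b assume "b \<in> {1..n}"
      then have "\<phi> (ebasis 2) b = comp_sum A 2 b" using n by (intro pw) auto
      then show "(if 3 \<le> a + b \<and> a + b \<le> n + 1 \<and> a + b - 1 \<le> t
         then A a * \<phi> (ebasis 2) b * (of_int (int b - int a) * \<alpha> (t + 3 - (a + b)))
         else 0) = (if 3 \<le> a + b \<and> a + b \<le> n + 1 \<and> a + b - 1 \<le> t
         then A a * comp_sum A 2 b * (of_int (int b - int a) * \<alpha> (t + 3 - (a + b)))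
         else 0)" by simp
    qed
    also have "\<dots> = (\<Sum>j=2..t. \<Sum>i=1..t-j+1.
                    of_int (int t - 2 * int i - int j + 3) * A i * comp_sum A 2 (t + 3 - (i + j)) * \<alpha> j)"
      by (rule bracket_sum[OF t]) (simp add: cs_zero)
    finally show ?thesis .
  qed
  show ?thesis
    using aut A1 main unfolding A_def Let_def by blast
qed

end
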